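(* Let $\mathbf x=(k,S,\Lambda,\mathbf a)$ be an abelian group $k$-parameter which is full, i.e. $\Lambda={}^{k+1}({}^\omega S)$ (and $\mathbf a$ is arbitrary). If $U\subseteq{}^\omega S$ and $|U|\ge(|S|+\aleph_0)^{+(k+1)}$ (the $(k+1)$-st successor cardinal of $|S|+\aleph_0$), then $G_U$ is not free.
   Context: For a set $S$, ${}^\omega S$ is the set of all functions $\omega\to S$. An abelian group $k$-parameter is $\mathbf x=(k,S,\Lambda,\mathbf a)$ with $k<\omega$, $S$ a set, $\Lambda\subseteq {}^{k+1}({}^\omega S)$ (sequences $\bar\eta=\langle\eta_0,\dots,\eta_k\rangle$, $\eta_\ell\in{}^\omega S$) and $\mathbf a:\Lambda\times\omega\to\mathbb Z$, $\mathbf a_{\bar\eta,n}=\mathbf a(\bar\eta,n)$. For $\bar\eta\in\Lambda$, $m\le k$, $n<\omega$, $\bar\eta\upharpoonleft\langle m,n\rangle$ is the sequence obtained from $\bar\eta$ by replacing $\eta_m$ with $\eta_m\restriction n$. $\Lambda_m=\{\bar\eta\upharpoonleft\langle m,n\rangle:\bar\eta\in\Lambda,n<\omega\}$, $\Lambda_{\le k}=\bigcup_{m\le k}\Lambda_m$. $G_{\mathbf x}$ is the abelian group generated by $z$, $x_{\bar\nu}$ ($\bar\nu\in\Lambda_{\le k}$), $y_{\bar\eta,n}$ ($\bar\eta\in\Lambda,n<\omega$) freely except for the relations $(n!)y_{\bar\eta,n+1}=y_{\bar\eta,n}+\mathbf a_{\bar\eta,n}z+\sum_{m\le k}x_{\bar\eta\upharpoonleft\langle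 m,n\rangle}$ ($\bar\eta\in\Lambda$, $n<\omega$). For $U\subseteq{}^\omega S$, $G_U$ is the subgroup of $G_{\mathbf x}$ generated by $\{z\}\cup\{y_{\bar\eta,n}:\bar\eta\in\Lambda\cap{}^{k+1}U,n<\omega\}\cup\{x_{\bar\eta\upharpoonleft\langle m,n\rangle}:\bar\eta\in\Lambda\cap{}^{k+1}U,m\le k,n<\omega\}$. *)

theory Defs
  imports "HOL-Algebra.Free_Abelian_Groups" "HOL-Algebra.Coset"
begin

(* An omega-sequence is a function nat => 'a; a finite sequence of length n is an 'a list;
   an entry of nu in Lambda_{<=k} is either finite (Inl) or infinite (Inr);
   a (k+1)-tuple is a list of length k+1. *)
datatype 'a gen = Zg | Xg "('a list + (nat \<Rightarrow> 'a)) list" | Yg "(nat \<Rightarrow> 'a) list" nat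

definition restr :: "(nat \<Rightarrow> 'a) list \<Rightarrow> nat \<Rightarrow> nat \<Rightarrow> ('a list + (nat \<Rightarrow> 'a)) list" where
  "restr eta m n = (map Inr eta)[m := Inl (map (eta ! m) [0..<n])]"

definition full_Lambda :: "nat \<Rightarrow> 'a set \<Rightarrow> (nat \<Rightarrow> 'a) list set" where
  "full_Lambda k S = {eta. length eta = Suc k \<and> (\<forall>i<Suc k. range (eta ! i) \<subseteq> S)}"

definition Lambda_le :: "nat \<Rightarrow> (nat \<Rightarrow> 'a) list set \<Rightarrow> ('a list + (nat \<Rightarrow> 'a)) list set" where
  "Lambda_le k L = {restr eta m n | eta m n. eta \<in> L \<and> m \<le> k}"

definition gens :: "nat \<Rightarrow> (nat \<Rightarrow> 'a) list set \<Rightarrow> 'a gen set" where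
  "gens k L = {Zg} \<union> Xg ` Lambda_le k L \<union> {Yg eta n | eta n. eta \<in> L}"

definition rel :: "nat \<Rightarrow> ((nat \<Rightarrow> 'a) list \<Rightarrow> nat \<Rightarrow> int) \<Rightarrow> (nat \<Rightarrow> 'a) list \<Rightarrow> nat \<Rightarrow> 'a gen \<Rightarrow>\<^sub>0 int" where
  "rel k a eta n =
     Poly_Mapping.single (Yg eta (Suc n)) (int (fact n))
     - Poly_Mapping.single (Yg eta n) 1
     - Poly_Mapping.single Zg (a eta n)
     - (\<Sum>m\<le>k. Poly_Mapping.single (Xg (restr eta m n)) 1)"

definition rels_subgroup :: "nat \<Rightarrow> (nat \<Rightarrow> 'a) list set \<Rightarrow> ((nat \<Rightarrow> 'a) list \<Rightarrow> nat \<Rightarrow> int) \<Rightarrow> ('a gen \<Rightarrow>\<^sub>0 int) set" where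
  "rels_subgroup k L a = generate (free_Abelian_group (gens k L)) {rel k a eta n | eta n. eta \<in> L}"

definition Gx :: "nat \<Rightarrow> (nat \<Rightarrow> 'a) list set \<Rightarrow> ((nat \<Rightarrow> 'a) list \<Rightarrow> nat \<Rightarrow> int) \<Rightarrow> ('a gen \<Rightarrow>\<^sub>0 int) set monoid" where
  "Gx k L a = free_Abelian_group (gens k L) Mod rels_subgroup k L a"

definition gen_elt :: "nat \<Rightarrow> (nat \<Rightarrow> 'a) list set \<Rightarrow> ((nat \<Rightarrow> 'a) list \<Rightarrow> nat \<Rightarrow> int) \<Rightarrow> 'a gen \<Rightarrow> ('a gen \<Rightarrow>\<^sub>0 int) set" where
  "gen_elt k L a g = r_coset (free_Abelian_group (gens k L)) (rels_subgroup k L a) (Poly_Mapping.single g 1)"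

definition gens_U :: "nat \<Rightarrow> (nat \<Rightarrow> 'a) list set \<Rightarrow> (nat \<Rightarrow> 'a) set \<Rightarrow> 'a gen set" where
  "gens_U k L U = {Zg} \<union> {Yg eta n | eta n. eta \<in> L \<and> set eta \<subseteq> U}
      \<union> {Xg (restr eta m n) | eta m n. eta \<in> L \<and> set eta \<subseteq> U \<and> m \<le> k}"

definition GU :: "nat \<Rightarrow> (nat \<Rightarrow> 'a) list set \<Rightarrow> ((nat \<Rightarrow> 'a) list \<Rightarrow> nat \<Rightarrow> int) \<Rightarrow> (nat \<Rightarrow> 'a) set \<Rightarrow> ('a gen \<Rightarrow>\<^sub>0 int) set monoid" where
  "GU k L a U = (Gx k L a)\<lparr>carrier := generate (Gx k L a) (gen_elt k L a ` gens_U k L U)\<rparr>"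

(* a group is free abelian if it is isomorphic to the free abelian group on some set
   (the basis may be taken of the element type, since a basis injects into the carrier) *)
definition free_abelian :: "('g, 'm) monoid_scheme \<Rightarrow> bool" where
  "free_abelian G \<longleftrightarrow> (\<exists>B :: 'g set. G \<cong> free_Abelian_group B)"

fun sucN :: "nat \<Rightarrow> 'b rel \<Rightarrow> 'c set \<Rightarrow> bool" where
  "sucN 0 r B = ordIso2 (card_of B) r"
| "sucN (Suc n) r B = (\<exists>C :: 'c set. sucN n r C \<and> ordIso2 (card_of B) (cardSuc (card_of C)))"

definition sucN_le :: "nat \<Rightarrow> 'b rel \<Rightarrow> 'c set \<Rightarrow> bool" where
  "sucN_le n r U \<longleftrightarrow> (\<exists>B :: 'c set. sucN n r B \<and> ordLeq3 (card_of B) (card_of U))"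

end

theory Submission
  imports Defs
begin
lemma sucN_ge:
  fixes X :: "'c set" and Lam :: "'b set"
  assumes "sucN n |Lam| X" shows "|Lam| \<le>o |X|"
  using assms
proof (induction n arbitrary: X)
  case 0 then show ?case by (simp add: ordIso_iff_ordLeq)
next
  case (Suc n)
  then obtain C :: "'c set" where C: "sucN n |Lam| C" "|X| =o cardSuc |C|" by auto
  have "|Lam| \<le>o |C|" using Suc.IH C(1) by blast
  moreover have "|C| <o cardSuc |C|" by (rule cardSuc_greater[OF card_of_Card_order])
  ultimately have "|Lam| <o cardSuc |C|" using ordLeq_ordLess_trans by blast
  then show ?case using C(2) ordIso_symmetric ordLess_ordIso_trans ordLess_imp_ordLeq by blast
qed

lemma others0:
  assumes L: "length ys = n" shows "{(a # ys) ! j |j. j < Suc n \<and> j \<noteq> 0} = set ys"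
proof (intro equalityI subsetI)
  fix x assume "x \<in> {(a # ys) ! j |j. j < Suc n \<and> j \<noteq> 0}"
  then obtain j where j: "x = (a#ys)!j" "j<Suc n" "j\<noteq>0" by auto
  then obtain i where "j = Suc i" by (cases j) auto
  then show "x \<in> set ys" using j L by (auto simp: set_conv_nth)
next
  fix x assume "x \<in> set ys"
  then obtain i where i: "i < n" "x = ys!i" using L by (auto simp: in_set_conv_nth)
  then have "x = (a#ys)!(Suc i) \<and> Suc i < Suc n \<and> Suc i \<noteq> 0" by simp
  then show "x \<in> {(a # ys) ! j |j. j < Suc n \<and> j \<noteq> 0}" by blast
qed

lemma othersSuc:
  "length ys = n \<Longrightarrow> {(a # ys) ! j |j. j < Suc n \<and> j \<noteq> Suc i}
     = insert a {ys!j | j. j < n \<and> j \<noteq> i}"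
  apply auto
  subgoal for j by (cases j) auto
  subgoal by (rule exI[of _ 0]) auto
  subgoal for j by (rule exI[of _ "Suc j"]) auto
  done

lemma free_set:
  fixes Lam :: "'b set" and A :: "'c set" and F :: "'c set \<Rightarrow> 'c set"
  assumes inf: "infinite Lam" and "sucN_le (Suc k) |Lam| A"
    and "\<And>s. finite s \<Longrightarrow> |F s| \<le>o |Lam|"
  shows "\<exists>xs. length xs = Suc k \<and> set xs \<subseteq> A \<and>
     (\<forall>m<Suc k. xs!m \<notin> F {xs!j | j. j < Suc k \<and> j \<noteq> m})"
  using assms(2,3)
proof (induction k arbitrary: A F)
  case 0
  then obtain B0 C :: "'c set" where C: "|C| =o |Lam|" "|B0| =o cardSuc |C|" "|B0| \<le>o |A|"
    unfolding sucN_le_def by auto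
  have "|F {}| \<le>o |Lam|" using 0 by auto
  also have "|Lam| \<le>o |C|" using C(1) ordIso_iff_ordLeq ordIso_symmetric by blast
  finally have "|F {}| \<le>o |C|" .
  moreover have "|C| <o cardSuc |C|" by (rule cardSuc_greater[OF card_of_Card_order])
  ultimately have "|F {}| <o |A|" using C(2,3) ordLeq_ordLess_trans ordLess_ordIso_trans
      ordIso_symmetric ordLess_ordLeq_trans by metis
  then have "\<not> A \<subseteq> F {}" using card_of_mono1 not_ordLess_ordLeq by blast
  then obtain a where "a \<in> A" "a \<notin> F {}" by auto
  then show ?case by (intro exI[of _ "[a]"]) auto
next
  case (Suc k)
  then obtain B0 C :: "'c set" where C: "sucN (Suc k) |Lam| C" "|B0| =o cardSuc |C|" "|B0| \<le>o |A|"
    unfolding sucN_le_def by auto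
  have "|C| <o cardSuc |C|" by (rule cardSuc_greater[OF card_of_Card_order])
  hence CA: "|C| <o |A|" using C(2,3) ordLess_ordIso_trans ordIso_symmetric ordLess_ordLeq_trans by metis
  then obtain f where f: "inj_on f C" "f ` C \<subseteq> A" using card_of_ordLeq ordLess_imp_ordLeq by metis
  define B where "B = f ` C"
  have BC: "|B| =o |C|" unfolding B_def using f(1) card_of_ordIsoI ordIso_symmetric
    by (metis bij_betw_imageI)
  have BA: "B \<subseteq> A" using f B_def by auto
  have LamC: "|Lam| \<le>o |C|" using sucN_ge C(1) by blast
  have LamB: "|Lam| \<le>o |B|" using LamC BC ordIso_symmetric ordLeq_ordIso_trans by blast
  have infB: "infinite B" using LamB inf card_of_ordLeq_finite by blast
  define B' where "B' = B \<union> (\<Union>t\<in>Fpow B. F t)"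
  have "|\<Union>t\<in>Fpow B. F t| \<le>o |B|"
  proof (rule card_of_UNION_ordLeq_infinite[OF infB])
    show "|Fpow B| \<le>o |B|" using card_of_Fpow_infinite[OF infB] ordIso_iff_ordLeq by blast
    show "\<forall>i\<in>Fpow B. |F i| \<le>o |B|" using Suc.prems(2) LamB ordLeq_transitive
      unfolding Fpow_def by blast
  qed
  hence "|B'| \<le>o |B|" unfolding B'_def using infB card_of_Un_ordLeq_infinite card_of_refl
    ordIso_iff_ordLeq by blast
  hence "|B'| <o |A|" using BC CA ordLeq_ordIso_trans ordLeq_ordLess_trans by blast
  then have "\<not> A \<subseteq> B'" using card_of_mono1 not_ordLess_ordLeq by blast
  then obtain a where a: "a \<in> A" "a \<notin> B'" by auto
  have "sucN_le (Suc k) ( |Lam| ) B" unfolding sucN_le_def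
    using C(1) BC ordIso_iff_ordLeq ordIso_symmetric by auto
  moreover have "\<And>s. finite s \<Longrightarrow> |F (insert a s)| \<le>o |Lam|" using Suc.prems(2) by blast
  ultimately obtain ys where ys: "length ys = Suc k" "set ys \<subseteq> B"
     "\<forall>m<Suc k. ys!m \<notin> F (insert a {ys!j | j. j < Suc k \<and> j \<noteq> m})"
    using Suc.IH[of B "\<lambda>s. F (insert a s)"] by blast
  show ?case
  proof (intro exI[of _ "a # ys"] conjI allI impI)
    show "length (a # ys) = Suc (Suc k)" using ys by simp
    show "set (a # ys) \<subseteq> A" using ys BA a by auto
    fix m assume m: "m < Suc (Suc k)"
    show "(a # ys) ! m \<notin> F {(a # ys) ! j |j. j < Suc (Suc k) \<and> j \<noteq> m}"
    proof (cases m)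
      case 0
      have e: "{(a # ys) ! j |j. j < Suc (Suc k) \<and> j \<noteq> m} = set ys"
        using others0[OF ys(1), of a] 0 by simp
      have "set ys \<in> Fpow B" using ys unfolding Fpow_def by auto
      hence "F (set ys) \<subseteq> B'" unfolding B'_def by blast
      thus ?thesis using e a(2) 0 by auto
    next
      case (Suc i)
      have e: "{(a # ys) ! j |j. j < Suc (Suc k) \<and> j \<noteq> m} = insert a {ys!j | j. j < Suc k \<and> j \<noteq> i}"
        using othersSuc[OF ys(1), of a i] Suc by simp
      have "i < Suc k" using Suc m by simp
      then have "ys ! i \<notin> F (insert a {ys!j | j. j < Suc k \<and> j \<noteq> i})" using ys(3) by blast
      then show ?thesis using e Suc by simp
    qed
  qed
qed

lemma single_in_FA: "g \<in> S \<Longrightarrow> Poly_Mapping.single g c \<in> carrier (free_Abelian_group S)"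
  by (simp add: keys_single)

lemma diff_in_FA: "p \<in> carrier (free_Abelian_group S) \<Longrightarrow> q \<in> carrier (free_Abelian_group S)
   \<Longrightarrow> p - q \<in> carrier (free_Abelian_group S)"
  using keys_diff by fastforce

lemma add_in_FA: "p \<in> carrier (free_Abelian_group S) \<Longrightarrow> q \<in> carrier (free_Abelian_group S)
   \<Longrightarrow> p + q \<in> carrier (free_Abelian_group S)"
  using keys_add by fastforce

lemma restr_in_Lambda_le: "eta \<in> L \<Longrightarrow> m \<le> k \<Longrightarrow> restr eta m n \<in> Lambda_le k L"
  unfolding Lambda_le_def by blast

lemma rel_carrier:
  assumes "eta \<in> L" shows "rel k a eta n \<in> carrier (free_Abelian_group (gens k L))"
proof -
  have g: "Yg eta m \<in> gens k L" for m using assms unfolding gens_def by blast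
  have z: "Zg \<in> gens k L" unfolding gens_def by blast
  have x: "Xg (restr eta m n) \<in> gens k L" if "m \<le> k" for m
    using assms that restr_in_Lambda_le unfolding gens_def by blast
  show ?thesis unfolding rel_def
    by (intro diff_in_FA single_in_FA sum_closed_free_Abelian_group g z x) auto
qed

lemma rels_sub_carrier:
  "{rel k a eta n | eta n. eta \<in> L} \<subseteq> carrier (free_Abelian_group (gens k L))"
  using rel_carrier by blast

lemma R_subgroup: "subgroup (rels_subgroup k L a) (free_Abelian_group (gens k L))"
  unfolding rels_subgroup_def
  by (rule group.generate_is_subgroup[OF group_free_Abelian_group rels_sub_carrier])

lemma R_normal: "rels_subgroup k L a \<lhd> free_Abelian_group (gens k L)"
  by (rule comm_group.subgroup_imp_normal[OF abelian_free_Abelian_group R_subgroup])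

lemma Gx_group: "group (Gx k L a)"
  unfolding Gx_def by (rule normal.factorgroup_is_group[OF R_normal])

lemma pi_hom: "(\<lambda>p. r_coset (free_Abelian_group (gens k L)) (rels_subgroup k L a) p)
   \<in> hom (free_Abelian_group (gens k L)) (Gx k L a)"
  unfolding Gx_def by (rule normal.r_coset_hom_Mod[OF R_normal])

lemma pi_group_hom: "group_hom (free_Abelian_group (gens k L)) (Gx k L a)
   (\<lambda>p. r_coset (free_Abelian_group (gens k L)) (rels_subgroup k L a) p)"
  by (simp add: group_hom_def group_hom_axioms_def Gx_group pi_hom)

lemma gens_U_sub: "gens_U k L U \<subseteq> gens k L"
  unfolding gens_U_def gens_def Lambda_le_def by blast

lemma gen_elt_carrier: "g \<in> gens k L \<Longrightarrow> gen_elt k L a g \<in> carrier (Gx k L a)"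
  unfolding gen_elt_def using pi_hom[of k L a] by (auto simp: hom_def)

lemma GU_subgroup: "subgroup (generate (Gx k L a) (gen_elt k L a ` gens_U k L U)) (Gx k L a)"
  by (rule group.generate_is_subgroup[OF Gx_group]) (use gen_elt_carrier gens_U_sub in blast)

lemma GU_group: "group (GU k L a U)"
  unfolding GU_def by (rule subgroup.subgroup_is_group[OF GU_subgroup Gx_group])

lemma generate_mono_gen: assumes "A \<subseteq> B" shows "generate G A \<subseteq> generate G B"
proof
  fix x assume "x \<in> generate G A" then show "x \<in> generate G B"
    by induction (use assms in \<open>auto intro: generate.intros\<close>)
qed

lemma generate_finite:
  assumes "x \<in> generate G A" shows "\<exists>A0. A0 \<subseteq> A \<and> finite A0 \<and> x \<in> generate G A0"
  using assms
proof (induction rule: generate.induct)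
  case one then show ?case by (intro exI[of _ "{}"]) (auto intro: generate.one)
next
  case (incl h) then show ?case by (intro exI[of _ "{h}"]) (auto intro: generate.incl)
next
  case (inv h) then show ?case by (intro exI[of _ "{h}"]) (auto intro: generate.inv)
next
  case (eng h1 h2)
  then obtain A1 A2 where "A1 \<subseteq> A" "finite A1" "h1 \<in> generate G A1"
     "A2 \<subseteq> A" "finite A2" "h2 \<in> generate G A2" by blast
  moreover have "generate G A1 \<subseteq> generate G (A1 \<union> A2)" "generate G A2 \<subseteq> generate G (A1 \<union> A2)"
    by (auto intro: generate_mono_gen[THEN subsetD])
  ultimately show ?case by (intro exI[of _ "A1 \<union> A2"]) (auto intro: generate.eng)
qed

definition wt :: "(nat \<Rightarrow> 'a) list \<Rightarrow> 'a gen \<Rightarrow> rat" where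
  "wt xs g = (case g of Yg zeta n \<Rightarrow> if zeta = xs then 1 / of_nat (\<Prod>i<n. fact i) else 0 | _ \<Rightarrow> 0)"

definition psi :: "(nat \<Rightarrow> 'a) list \<Rightarrow> ('a gen \<Rightarrow>\<^sub>0 int) \<Rightarrow> rat" where
  "psi xs p = (\<Sum>g\<in>Poly_Mapping.keys p. of_int (Poly_Mapping.lookup p g) * wt xs g)"

lemma psi_superset:
  assumes "finite K" "Poly_Mapping.keys p \<subseteq> K"
  shows "psi xs p = (\<Sum>g\<in>K. of_int (Poly_Mapping.lookup p g) * wt xs g)"
  unfolding psi_def
  by (rule sum.mono_neutral_left[OF assms]) (auto simp: in_keys_iff)

lemma psi_add: "psi xs (p + q) = psi xs p + psi xs q"
proof -
  define K where "K = Poly_Mapping.keys p \<union> Poly_Mapping.keys q"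
  have f: "finite K" unfolding K_def by simp
  have e1: "psi xs p = (\<Sum>g\<in>K. of_int (Poly_Mapping.lookup p g) * wt xs g)"
    by (rule psi_superset[OF f]) (simp add: K_def)
  have e2: "psi xs q = (\<Sum>g\<in>K. of_int (Poly_Mapping.lookup q g) * wt xs g)"
    by (rule psi_superset[OF f]) (simp add: K_def)
  have e3: "psi xs (p + q) = (\<Sum>g\<in>K. of_int (Poly_Mapping.lookup (p+q) g) * wt xs g)"
    by (rule psi_superset[OF f]) (unfold K_def, rule keys_add)
  have e4: "(\<Sum>g\<in>K. of_int (Poly_Mapping.lookup (p+q) g) * wt xs g)
     = (\<Sum>g\<in>K. of_int (Poly_Mapping.lookup p g) * wt xs g + of_int (Poly_Mapping.lookup q g) * wt xs g)"
    by (rule sum.cong) (simp_all add: lookup_add distrib_right)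
  show ?thesis unfolding e1 e2 e3 e4 by (rule sum.distrib)
qed

lemma psi_zero[simp]: "psi xs 0 = 0"
  by (simp add: psi_def)

lemma psi_uminus: "psi xs (- p) = - psi xs p"
  using psi_add[of xs p "-p"] by simp

lemma psi_diff: "psi xs (p - q) = psi xs p - psi xs q"
  using psi_add[of xs p "-q"] psi_uminus[of xs q] by simp

lemma psi_single: "psi xs (Poly_Mapping.single g c) = of_int c * wt xs g"
  by (simp add: psi_def keys_single)

lemma psi_sum: "psi xs (sum f A) = (\<Sum>i\<in>A. psi xs (f i))"
proof (induction A rule: infinite_finite_induct)
  case (insert x F)
  have "psi xs (sum f (insert x F)) = psi xs (f x + sum f F)" using insert(1,2) by simp
  also have "\<dots> = psi xs (f x) + psi xs (sum f F)" by (rule psi_add)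
  also have "\<dots> = psi xs (f x) + (\<Sum>i\<in>F. psi xs (f i))" using insert(3) by simp
  also have "\<dots> = (\<Sum>i\<in>insert x F. psi xs (f i))" using insert(1,2) by simp
  finally show ?case .
next
  case (infinite A)
  then show ?case by simp
next
  case empty
  then show ?case by simp
qed

lemma aux_rat: "(a::rat) \<noteq> 0 \<Longrightarrow> a * (1 / (b * a)) = 1 / b"
  by simp

lemma psi_rel: "psi xs (rel k a eta n) = 0"
proof -
  have x: "psi xs (\<Sum>m\<le>k. Poly_Mapping.single (Xg (restr eta m n)) 1) = 0"
    by (simp only: psi_sum psi_single wt_def gen.case mult_zero_right sum.neutral_const)
  have "of_int (int (fact n)) * wt xs (Yg eta (Suc n)) = wt xs (Yg eta n)"
  proof (cases "eta = xs")
    case True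
    define P where "P = (\<Prod>i<n. fact i :: nat)"
    have w1: "wt xs (Yg eta (Suc n)) = 1 / (of_nat P * of_nat (fact n))"
      using True by (simp only: True simp_thms wt_def gen.case if_True P_def prod.lessThan_Suc of_nat_mult)
    have w0: "wt xs (Yg eta n) = 1 / of_nat P"
      using True by (simp only: True simp_thms wt_def gen.case if_True P_def)
    have "P \<noteq> 0" unfolding P_def by (simp add: prod_zero_iff)
    hence "of_nat P \<noteq> (0::rat)" by simp
    have nz: "of_nat (fact n) \<noteq> (0::rat)" by simp
    have e: "of_int (int (fact n)) = (of_nat (fact n) :: rat)" by (rule of_int_of_nat_eq)
    show ?thesis unfolding w1 w0 e by (rule aux_rat[OF nz])
  next
    case False
    then show ?thesis by (simp only: wt_def gen.case if_False mult_zero_right)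
  qed
  moreover have "psi xs (rel k a eta n) = of_int (int (fact n)) * wt xs (Yg eta (Suc n))
      - of_int 1 * wt xs (Yg eta n) - of_int (a eta n) * wt xs Zg - 0"
    unfolding rel_def by (simp only: psi_diff psi_single x)
  moreover have "wt xs Zg = 0" by (simp only: wt_def gen.case)
  hence "of_int (a eta n) * wt xs Zg = 0" by (simp only: mult_zero_right)
  ultimately show ?thesis by (simp only: of_int_1 mult_1_left diff_zero)
qed

definition Psi :: "(nat \<Rightarrow> 'a) list \<Rightarrow> ('a gen \<Rightarrow>\<^sub>0 int) set \<Rightarrow> rat" where
  "Psi xs X = psi xs (SOME p. p \<in> X)"

lemma psi_R:
  assumes "x \<in> rels_subgroup k L a" shows "psi xs x = 0"
  using assms unfolding rels_subgroup_def
proof (induction rule: generate.induct)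
  case one
  then show ?case by simp
next
  case (incl h)
  then show ?case using psi_rel by blast
next
  case (inv h)
  then obtain eta n where h: "h = rel k a eta n" "eta \<in> L" by blast
  have "Poly_Mapping.keys h \<subseteq> gens k L" using rel_carrier[OF h(2)] h(1) by simp
  then have hi: "inv\<^bsub>free_Abelian_group (gens k L)\<^esub> h = - h" by (rule inv_free_Abelian_group)
  have "psi xs (inv\<^bsub>free_Abelian_group (gens k L)\<^esub> h) = psi xs (- h)" using hi by simp
  also have "\<dots> = - psi xs h" by (rule psi_uminus)
  also have "\<dots> = 0" using h(1) psi_rel by simp
  finally show ?case .
next
  case (eng h1 h2)
  then show ?case by (simp add: psi_add)
qed

lemma Psi_pi:
  assumes p: "p \<in> carrier (free_Abelian_group (gens k L))"
  shows "Psi xs (r_coset (free_Abelian_group (gens k L)) (rels_subgroup k L a) p) = psi xs p"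
proof -
  let ?F = "free_Abelian_group (gens k L)"
  let ?R = "rels_subgroup k L a"
  have ne: "p \<in> r_coset ?F ?R p"
    by (rule group.rcos_self[OF group_free_Abelian_group p R_subgroup])
  define q where "q = (SOME q. q \<in> r_coset ?F ?R p)"
  have "q \<in> r_coset ?F ?R p" unfolding q_def using ne by (rule someI)
  then obtain h where h: "h \<in> ?R" "q = h + p" unfolding r_coset_def by auto
  have "psi xs q = psi xs h + psi xs p" using h(2) psi_add by simp
  also have "\<dots> = psi xs p" using psi_R[OF h(1)] by simp
  finally show ?thesis unfolding Psi_def q_def .
qed

lemma carrier_Gx_pi:
  assumes "X \<in> carrier (Gx k L a)"
  obtains p where "p \<in> carrier (free_Abelian_group (gens k L))"
    "X = r_coset (free_Abelian_group (gens k L)) (rels_subgroup k L a) p"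
  using assms unfolding Gx_def carrier_FactGroup by blast

lemma Psi_mult:
  assumes "X \<in> carrier (Gx k L a)" "Y \<in> carrier (Gx k L a)"
  shows "Psi xs (X \<otimes>\<^bsub>Gx k L a\<^esub> Y) = Psi xs X + Psi xs Y"
proof -
  obtain p where p: "p \<in> carrier (free_Abelian_group (gens k L))"
    "X = r_coset (free_Abelian_group (gens k L)) (rels_subgroup k L a) p"
    using carrier_Gx_pi[OF assms(1)] by blast
  obtain q where q: "q \<in> carrier (free_Abelian_group (gens k L))"
    "Y = r_coset (free_Abelian_group (gens k L)) (rels_subgroup k L a) q"
    using carrier_Gx_pi[OF assms(2)] by blast
  have "X \<otimes>\<^bsub>Gx k L a\<^esub> Y = r_coset (free_Abelian_group (gens k L)) (rels_subgroup k L a) (p + q)"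
    using hom_mult[OF pi_hom p(1) q(1)] p(2) q(2) by simp
  then show ?thesis using Psi_pi p q add_in_FA[OF p(1) q(1)] psi_add by metis
qed

lemma Psi_one: "Psi xs (\<one>\<^bsub>Gx k L a\<^esub>) = 0"
proof -
  have "r_coset (free_Abelian_group (gens k L)) (rels_subgroup k L a) 0 = \<one>\<^bsub>Gx k L a\<^esub>"
    using hom_one[OF pi_hom group_free_Abelian_group Gx_group] by simp
  moreover have "(0 :: 'a gen \<Rightarrow>\<^sub>0 int) \<in> carrier (free_Abelian_group (gens k L))" by simp
  ultimately show ?thesis using Psi_pi by (metis psi_zero)
qed

lemma Psi_inv:
  assumes "X \<in> carrier (Gx k L a)"
  shows "Psi xs (inv\<^bsub>Gx k L a\<^esub> X) = - Psi xs X"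
proof -
  have g: "group (Gx k L a)" by (rule Gx_group)
  have "X \<otimes>\<^bsub>Gx k L a\<^esub> inv\<^bsub>Gx k L a\<^esub> X = \<one>\<^bsub>Gx k L a\<^esub>" using group.r_inv[OF g assms] .
  then have "Psi xs X + Psi xs (inv\<^bsub>Gx k L a\<^esub> X) = 0"
    using Psi_mult[OF assms group.inv_closed[OF g assms]] Psi_one by metis
  then show ?thesis by simp
qed

lemma Psi_generate:
  assumes "A \<subseteq> carrier (Gx k L a)" "\<forall>X\<in>A. Psi xs X = 0" "X \<in> generate (Gx k L a) A"
  shows "Psi xs X = 0"
  using assms(3)
proof (induction rule: generate.induct)
  case one then show ?case by (rule Psi_one)
next
  case (incl h) then show ?case using assms(2) by blast
next
  case (inv h) then show ?case using assms Psi_inv by fastforce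
next
  case (eng h1 h2)
  have "h1 \<in> carrier (Gx k L a)" "h2 \<in> carrier (Gx k L a)"
    using eng(1,2) group.generate_in_carrier[OF Gx_group assms(1)] by blast+
  then show ?case using Psi_mult[of h1 k L a h2 xs] eng.IH by simp
qed

lemma gen_in:
  assumes A: "A \<subseteq> gens k L" and p: "Poly_Mapping.keys p \<subseteq> A"
  shows "r_coset (free_Abelian_group (gens k L)) (rels_subgroup k L a) p
     \<in> generate (Gx k L a) (gen_elt k L a ` A)"
proof -
  let ?pi = "\<lambda>p. r_coset (free_Abelian_group (gens k L)) (rels_subgroup k L a) p"
  have sub: "gen_elt k L a ` A \<subseteq> carrier (Gx k L a)" using gen_elt_carrier A by blast
  show ?thesis
  proof (rule free_Abelian_group_induct[OF p])
    have "?pi 0 = \<one>\<^bsub>Gx k L a\<^esub>"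
      using hom_one[OF pi_hom group_free_Abelian_group Gx_group] by simp
    then show "?pi 0 \<in> generate (Gx k L a) (gen_elt k L a ` A)" by (simp add: generate.one)
  next
    fix x y :: "'a gen \<Rightarrow>\<^sub>0 int"
    assume 2: "Poly_Mapping.keys x \<subseteq> A" "Poly_Mapping.keys y \<subseteq> A"
      "?pi x \<in> generate (Gx k L a) (gen_elt k L a ` A)"
      "?pi y \<in> generate (Gx k L a) (gen_elt k L a ` A)"
    have x: "x \<in> carrier (free_Abelian_group (gens k L))" using 2 A by auto
    have y: "y \<in> carrier (free_Abelian_group (gens k L))" using 2 A by auto
    have "x - y = x \<otimes>\<^bsub>free_Abelian_group (gens k L)\<^esub> inv\<^bsub>free_Abelian_group (gens k L)\<^esub> y"
      using y by simp
    then have "?pi (x - y) = ?pi (x \<otimes>\<^bsub>free_Abelian_group (gens k L)\<^esub> inv\<^bsub>free_Abelian_group (gens k L)\<^esub> y)"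
      by (rule arg_cong)
    also have "\<dots> = ?pi x \<otimes>\<^bsub>Gx k L a\<^esub> ?pi (inv\<^bsub>free_Abelian_group (gens k L)\<^esub> y)"
      by (rule hom_mult[OF pi_hom[of k L a] x group.inv_closed[OF group_free_Abelian_group y]])
    also have "?pi (inv\<^bsub>free_Abelian_group (gens k L)\<^esub> y) = inv\<^bsub>Gx k L a\<^esub> ?pi y"
      by (rule group_hom.hom_inv[OF pi_group_hom[of k L a] y])
    finally have "?pi (x - y) = ?pi x \<otimes>\<^bsub>Gx k L a\<^esub> inv\<^bsub>Gx k L a\<^esub> ?pi y" .
    moreover have "inv\<^bsub>Gx k L a\<^esub> ?pi y \<in> generate (Gx k L a) (gen_elt k L a ` A)"
      by (rule group.generate_m_inv_closed[OF Gx_group sub 2(4)])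
    ultimately show "?pi (x - y) \<in> generate (Gx k L a) (gen_elt k L a ` A)"
      using 2(3) by (simp add: generate.eng)
  next
    fix g assume "g \<in> A"
    then show "?pi (frag_of g) \<in> generate (Gx k L a) (gen_elt k L a ` A)"
      unfolding gen_elt_def by (auto intro: generate.incl)
  qed
qed

lemma fin_le_inf: "finite A \<Longrightarrow> infinite B \<Longrightarrow> |A| \<le>o |B|"
  using ordLess_imp_ordLeq[OF finite_ordLess_infinite2] by blast

lemma Fcard_general:
  fixes S :: "'a set" and s :: "(nat \<Rightarrow> 'a) set" and K :: "'a gen \<Rightarrow> 'x set" and J :: "'x \<Rightarrow> 'y set"
  assumes fs: "finite s" and fK: "\<And>g. finite (K g)" and fJ: "\<And>b. finite (J b)"
  shows "|\<Union>b\<in>(\<Union>g\<in>insert Zg (Xg ` lists (Inl ` lists S \<union> Inr ` s)). K g). J b|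
     \<le>o |S <+> (UNIV::nat set)|"
proof -
  let ?Lam = "S <+> (UNIV::nat set)"
  have inf: "infinite ?Lam" by simp
  have listsLam: "|lists ?Lam| \<le>o |?Lam|"
    using card_of_lists_infinite[OF inf] ordIso_iff_ordLeq by blast
  have c1: "|lists S| \<le>o |?Lam|"
    using card_of_lists_mono[OF card_of_Plus1[of S "UNIV::nat set"]] listsLam ordLeq_transitive by blast
  have c2: "|Inl ` lists S \<union> Inr ` s| \<le>o |?Lam|"
  proof (rule card_of_Un_ordLeq_infinite[OF inf])
    show "|(Inl ` lists S) :: ('a list + (nat \<Rightarrow> 'a)) set| \<le>o |?Lam|" using card_of_image c1 ordLeq_transitive by blast
    show "|(Inr ` s) :: ('a list + (nat \<Rightarrow> 'a)) set| \<le>o |?Lam|" using fin_le_inf[OF finite_imageI[OF fs] inf] .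
  qed
  have c3: "|lists (Inl ` lists S \<union> Inr ` s)| \<le>o |?Lam|"
    using card_of_lists_mono[OF c2] listsLam ordLeq_transitive by blast
  have c4: "|insert Zg (Xg ` lists (Inl ` lists S \<union> Inr ` s))| \<le>o |?Lam|"
  proof -
    have "|{Zg} \<union> Xg ` lists (Inl ` lists S \<union> Inr ` s)| \<le>o |?Lam|"
    proof (rule card_of_Un_ordLeq_infinite[OF inf])
      show "|{Zg}| \<le>o |?Lam|" using fin_le_inf[OF _ inf] by simp
      show "|Xg ` lists (Inl ` lists S \<union> Inr ` s)| \<le>o |?Lam|"
        using card_of_image c3 ordLeq_transitive by blast
    qed
    then show ?thesis by simp
  qed
  have c5: "|\<Union>g\<in>insert Zg (Xg ` lists (Inl ` lists S \<union> Inr ` s)). K g| \<le>o |?Lam|"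
    by (rule card_of_UNION_ordLeq_infinite[OF inf c4]) (use fK fin_le_inf[OF _ inf] in blast)
  show ?thesis
    by (rule card_of_UNION_ordLeq_infinite[OF inf c5]) (use fJ fin_le_inf[OF _ inf] in blast)
qed

lemma frag_cmul_single: "frag_cmul c (frag_of g) = Poly_Mapping.single g c"
  by (rule poly_mapping_eqI) (simp add: lookup_single)

lemma prod_fact_big: "(\<Prod>i<Suc m. fact i :: int) \<ge> int m"
proof -
  have "(\<Prod>i<m. fact i :: int) \<ge> 1" by (rule prod_ge_1) simp
  moreover have "(fact m :: int) \<ge> int m" using fact_ge_self[of m] by (metis of_nat_fact of_nat_mono)
  ultimately have "(\<Prod>i<m. fact i :: int) * fact m \<ge> 1 * int m"
    by (intro mult_mono) auto
  then show ?thesis by simp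
qed

fun involved :: "'a gen \<Rightarrow> (nat \<Rightarrow> 'a) set" where
  "involved (Yg z n) = set z"
| "involved Zg = {}"
| "involved (Xg v) = {}"

lemma Psi_gen_elt:
  assumes "g \<in> gens k L"
  shows "Psi xs (gen_elt k L a g) = wt xs g"
  using Psi_pi[of "frag_of g" k L xs a] assms unfolding gen_elt_def by (simp add: psi_single)

theorem claim1p14:
  fixes k :: nat and S :: "'a set" and a :: "(nat \<Rightarrow> 'a) list \<Rightarrow> nat \<Rightarrow> int"
    and U :: "(nat \<Rightarrow> 'a) set"
  assumes "U \<subseteq> {eta. range eta \<subseteq> S}"
    and "sucN_le (Suc k) (BNF_Cardinal_Arithmetic.csum (card_of S) natLeq) U"
  shows "\<not> free_abelian (GU k (full_Lambda k S) a U)"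
proof
  assume "free_abelian (GU k (full_Lambda k S) a U)"
  then obtain B :: "('a gen \<Rightarrow>\<^sub>0 int) set set" and \<phi> where
    iso: "\<phi> \<in> iso (GU k (full_Lambda k S) a U) (free_Abelian_group B)"
    unfolding free_abelian_def is_iso_def by blast
  define L where "L = full_Lambda k S"
  let ?G = "Gx k L a"
  let ?H = "generate (Gx k L a) (gen_elt k L a ` gens_U k L U)"
  let ?FB = "free_Abelian_group B"
  let ?FA = "free_Abelian_group (gens k L)"
  let ?R = "rels_subgroup k L a"
  let ?pi = "\<lambda>p. r_coset (free_Abelian_group (gens k L)) (rels_subgroup k L a) p"
  let ?GU = "GU k L a U"
  have iso: "\<phi> \<in> iso ?GU ?FB" using iso unfolding L_def .
  have carrGU: "carrier ?GU = ?H" by (simp add: GU_def)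
  have oneGU: "\<one>\<^bsub>?GU\<^esub> = \<one>\<^bsub>?G\<^esub>" by (simp add: GU_def)
  have multGU: "X \<otimes>\<^bsub>?GU\<^esub> Y = X \<otimes>\<^bsub>?G\<^esub> Y" for X Y by (simp add: GU_def)
  have Hsub: "subgroup ?H ?G" by (rule GU_subgroup)
  have Gg: "group ?G" by (rule Gx_group)
  have Hcarr: "?H \<subseteq> carrier ?G" using Hsub subgroup.subset by blast
  have hom: "\<phi> \<in> hom ?GU ?FB" using iso unfolding iso_def by blast
  have gh: "group_hom ?GU ?FB \<phi>"
    unfolding group_hom_def group_hom_axioms_def using GU_group hom by simp
  have bij: "bij_betw \<phi> ?H (carrier ?FB)" using iso carrGU unfolding iso_def by simp
  define \<phi>i where "\<phi>i = inv_into ?H \<phi>"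
  have surj: "\<phi> ` ?H = carrier ?FB" using bij bij_betw_imp_surj_on by blast
  have injH: "inj_on \<phi> ?H" using bij bij_betw_imp_inj_on by blast
  have \<phi>i_in: "p \<in> carrier ?FB \<Longrightarrow> \<phi>i p \<in> ?H" for p
    unfolding \<phi>i_def using surj inv_into_into by metis
  have \<phi>\<phi>i: "p \<in> carrier ?FB \<Longrightarrow> \<phi> (\<phi>i p) = p" for p
    unfolding \<phi>i_def using surj f_inv_into_f by metis
  have \<phi>i\<phi>: "X \<in> ?H \<Longrightarrow> \<phi>i (\<phi> X) = X" for X
    unfolding \<phi>i_def using injH inv_into_f_f by metis
  have \<phi>_carr: "X \<in> ?H \<Longrightarrow> \<phi> X \<in> carrier ?FB" for X using surj by blast
  have \<phi>_mult: "X \<in> ?H \<Longrightarrow> Y \<in> ?H \<Longrightarrow> \<phi> (X \<otimes>\<^bsub>?G\<^esub> Y) = \<phi> X + \<phi> Y" for X Y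
    using hom_mult[OF hom, of X Y] carrGU multGU by simp
  have \<phi>_inv: "X \<in> ?H \<Longrightarrow> \<phi> (inv\<^bsub>?G\<^esub> X) = - \<phi> X" for X
  proof -
    assume X: "X \<in> ?H"
    have "inv\<^bsub>?GU\<^esub> X = inv\<^bsub>?G\<^esub> X"
      using group.m_inv_consistent[OF Gg Hsub X] by (simp add: GU_def)
    moreover have "\<phi> (inv\<^bsub>?GU\<^esub> X) = inv\<^bsub>?FB\<^esub> (\<phi> X)"
      using group_hom.hom_inv[OF gh] X carrGU by simp
    moreover have "inv\<^bsub>?FB\<^esub> (\<phi> X) = - \<phi> X" using \<phi>_carr[OF X] by simp
    ultimately show ?thesis by simp
  qed
  have \<phi>_one: "\<phi> (\<one>\<^bsub>?G\<^esub>) = 0"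
    using group_hom.hom_one[OF gh] oneGU by simp
  have \<phi>_pow: "X \<in> ?H \<Longrightarrow> \<phi> (X [^]\<^bsub>?G\<^esub> (n::nat)) = frag_cmul (int n) (\<phi> X)" for X n
  proof -
    assume X: "X \<in> ?H"
    have "X [^]\<^bsub>?G\<^esub> n = X [^]\<^bsub>?GU\<^esub> n"
      using monoid.nat_pow_consistent[OF group.is_monoid[OF Gg]] by (simp add: GU_def)
    moreover have "\<phi> (X [^]\<^bsub>?GU\<^esub> n) = \<phi> X [^]\<^bsub>?FB\<^esub> n"
      using group_hom.hom_nat_pow[OF gh] X carrGU by simp
    ultimately show ?thesis by simp
  qed
  have invb_ex: "\<exists>A'. finite A' \<and> A' \<subseteq> gens_U k L U \<and> \<phi>i (frag_of b) \<in> generate ?G (gen_elt k L a ` A')"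
    if b: "b \<in> B" for b
  proof -
    have "frag_of b \<in> carrier ?FB" using b by simp
    then have Hb: "\<phi>i (frag_of b) \<in> ?H" by (rule \<phi>i_in)
    obtain A0 where A0: "A0 \<subseteq> gen_elt k L a ` gens_U k L U" "finite A0" "\<phi>i (frag_of b) \<in> generate ?G A0"
      using generate_finite[OF Hb] by (elim exE conjE)
    then obtain A' where "A' \<subseteq> gens_U k L U" "finite A'" "A0 = gen_elt k L a ` A'"
      using finite_subset_image[OF A0(2,1)] by blast
    then show ?thesis using A0(3) by blast
  qed
  define invb where "invb b = (SOME A'. finite A' \<and> A' \<subseteq> gens_U k L U \<and> \<phi>i (frag_of b) \<in> generate ?G (gen_elt k L a ` A'))" for b
  have invb: "finite (invb b) \<and> invb b \<subseteq> gens_U k L U \<and> \<phi>i (frag_of b) \<in> generate ?G (gen_elt k L a ` invb b)"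
    if "b \<in> B" for b
    unfolding invb_def by (rule someI_ex[OF invb_ex[OF that]])
  define invs where "invs b = (if b \<in> B then \<Union> (involved ` invb b) else {})" for b
  have fin_inv: "finite (involved g)" for g :: "'a gen" by (cases g) auto
  have fin_invs: "finite (invs b)" for b
    unfolding invs_def using invb fin_inv by auto
  define F where "F s = (\<Union>b\<in>(\<Union>g\<in>insert Zg (Xg ` lists (Inl ` lists S \<union> Inr ` s)). Poly_Mapping.keys (\<phi> (gen_elt k L a g))). invs b)" for s
  have Fcard: "finite s \<Longrightarrow> |F s| \<le>o |S <+> (UNIV::nat set)|" for s
    unfolding F_def by (rule Fcard_general) (auto simp: fin_invs)
  have hyp: "sucN_le (Suc k) |S <+> (UNIV::nat set)| U"
    using assms(2) unfolding csum_def Field_card_of Field_natLeq .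
  have infL: "infinite (S <+> (UNIV::nat set))" by simp
  have ex: "\<exists>xs. length xs = Suc k \<and> set xs \<subseteq> U \<and>
    (\<forall>m<Suc k. xs!m \<notin> F {xs!j | j. j < Suc k \<and> j \<noteq> m})"
    by (rule free_set[OF infL hyp Fcard])
  then obtain xs where xs: "length xs = Suc k" "set xs \<subseteq> U"
    "\<forall>m<Suc k. xs!m \<notin> F {xs!j | j. j < Suc k \<and> j \<noteq> m}"
    by blast
  have rangeS: "range (xs!i) \<subseteq> S" if i: "i < Suc k" for i
  proof -
    have "xs!i \<in> set xs" using nth_mem[of i xs] xs(1) i by simp
    then have "xs!i \<in> U" using xs(2) by blast
    then show ?thesis using assms(1) by blast
  qed
  have xsL: "xs \<in> L" unfolding L_def full_Lambda_def using xs(1) rangeS by simp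

  have YgU: "Yg xs n \<in> gens_U k L U" for n unfolding gens_U_def using xsL xs(2) by blast
  have XgU: "Xg (restr xs m n) \<in> gens_U k L U" if "m \<le> k" for m n
    unfolding gens_U_def using xsL xs(2) that by blast
  have ZgU: "Zg \<in> gens_U k L U" unfolding gens_U_def by blast
  have gUsub: "gens_U k L U \<subseteq> gens k L" by (rule gens_U_sub)
  have genH: "gen_elt k L a g \<in> ?H" if "g \<in> gens_U k L U" for g
    using that by (intro generate.incl imageI)
  define An where "An n = insert Zg {Xg (restr xs m n) | m. m \<le> k}" for n
  have An_sub: "An n \<subseteq> gens_U k L U" for n unfolding An_def using ZgU XgU by blast
  define B0 where "B0 = (\<Union>n. \<Union>g\<in>An n. Poly_Mapping.keys (\<phi> (gen_elt k L a g)))"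
  have Hphi: "X \<in> ?H \<and> Poly_Mapping.keys (\<phi> X) \<subseteq> B0"
    if X: "X \<in> generate ?G (gen_elt k L a ` An n)" for X n
    using X
  proof (induction rule: generate.induct)
    case one
    have "\<one>\<^bsub>?G\<^esub> \<in> ?H" by (rule generate.one)
    then show ?case using \<phi>_one by simp
  next
    case (incl h)
    then obtain g where g: "g \<in> An n" "h = gen_elt k L a g" by blast
    have "h \<in> ?H" using g genH An_sub by blast
    moreover have "Poly_Mapping.keys (\<phi> h) \<subseteq> B0" unfolding B0_def using g by blast
    ultimately show ?case by blast
  next
    case (inv h)
    then obtain g where g: "g \<in> An n" "h = gen_elt k L a g" by blast
    have gU: "g \<in> gens_U k L U" using g(1) An_sub by blast
    have hH: "h \<in> ?H" using g(2) genH[OF gU] by simp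
    have "inv\<^bsub>?G\<^esub> h \<in> ?H" using g(2) gU by (auto intro: generate.inv)
    moreover have "Poly_Mapping.keys (\<phi> h) \<subseteq> B0" unfolding B0_def using g by blast
    ultimately show ?case using \<phi>_inv[OF hH] by simp
  next
    case (eng h1 h2)
    have "h1 \<otimes>\<^bsub>?G\<^esub> h2 \<in> ?H" using eng.IH by (auto intro: generate.eng)
    moreover have "Poly_Mapping.keys (\<phi> (h1 \<otimes>\<^bsub>?G\<^esub> h2)) \<subseteq> B0"
      using \<phi>_mult[of h1 h2] eng.IH keys_add[of "\<phi> h1" "\<phi> h2"] by auto
    ultimately show ?case by blast
  qed
  have relR: "rel k a xs n \<in> ?R" for n
    unfolding rels_subgroup_def by (rule generate.incl) (use xsL in blast)
  have Rsub: "subgroup ?R ?FA" by (rule R_subgroup)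
  have FAg: "group ?FA" by simp
  define qn where "qn n = Poly_Mapping.single Zg (a xs n) + (\<Sum>m\<le>k. frag_of (Xg (restr xs m n)))" for n
  define pn where "pn n = Poly_Mapping.single (Yg xs (Suc n)) (int (fact n)) - frag_of (Yg xs n)" for n
  have pq: "pn n = rel k a xs n + qn n" for n unfolding pn_def qn_def rel_def by (simp add: algebra_simps)
  have keys_qn: "Poly_Mapping.keys (qn n) \<subseteq> An n" for n
  proof -
    have "Poly_Mapping.keys (Poly_Mapping.single Zg (a xs n)) \<subseteq> An n"
      unfolding An_def by (simp add: keys_single)
    moreover have "Poly_Mapping.keys (\<Sum>m\<le>k. frag_of (Xg (restr xs m n))) \<subseteq> An n"
    proof -
      have "Poly_Mapping.keys (\<Sum>m\<le>k. frag_of (Xg (restr xs m n)))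
          \<subseteq> (\<Union>m\<in>{..k}. Poly_Mapping.keys (frag_of (Xg (restr xs m n))))" by (rule keys_sum)
      also have "\<dots> \<subseteq> An n" unfolding An_def by (auto simp: keys_frag_of)
      finally show ?thesis .
    qed
    moreover have "Poly_Mapping.keys (qn n) \<subseteq> Poly_Mapping.keys (Poly_Mapping.single Zg (a xs n))
       \<union> Poly_Mapping.keys (\<Sum>m\<le>k. frag_of (Xg (restr xs m n)))"
      unfolding qn_def by (rule keys_add)
    ultimately show ?thesis by blast
  qed
  have An_gens: "An n \<subseteq> gens k L" for n using An_sub gUsub by blast
  have qn_carr: "qn n \<in> carrier ?FA" for n using keys_qn[of n] An_gens[of n] by simp
  have rel_carr: "rel k a xs n \<in> carrier ?FA" for n by (rule rel_carrier[OF xsL])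
  have pi_eq: "?pi (pn n) = ?pi (qn n)" for n
  proof -
    have "rel k a xs n \<otimes>\<^bsub>?FA\<^esub> qn n \<in> ?pi (qn n)"
      by (rule group.rcosI[OF FAg relR subgroup.subset[OF Rsub] qn_carr])
    then have "pn n \<in> ?pi (qn n)" using pq[of n] by simp
    then show ?thesis using group.repr_independence[OF FAg _ qn_carr Rsub] by metis
  qed
  have E: "?pi (pn n) \<in> ?H \<and> Poly_Mapping.keys (\<phi> (?pi (pn n))) \<subseteq> B0" for n
    using Hphi[OF gen_in[OF An_gens keys_qn]] pi_eq by metis
  define Y where "Y n = gen_elt k L a (Yg xs n)" for n
  have YH: "Y n \<in> ?H" for n unfolding Y_def by (rule genH[OF YgU])
  have Yg_gens: "Yg xs n \<in> gens k L" for n using YgU gUsub by blast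
  have fo_carr: "frag_of (Yg xs n) \<in> carrier ?FA" for n using Yg_gens by simp
  have pn_carr: "pn n \<in> carrier ?FA" for n unfolding pn_def
    by (intro diff_in_FA single_in_FA Yg_gens)
  have EY: "?pi (pn n) \<otimes>\<^bsub>?G\<^esub> Y n = Y (Suc n) [^]\<^bsub>?G\<^esub> (fact n :: nat)" for n
  proof -
    have "?pi (pn n) \<otimes>\<^bsub>?G\<^esub> Y n = ?pi (pn n \<otimes>\<^bsub>?FA\<^esub> frag_of (Yg xs n))"
      unfolding Y_def gen_elt_def using hom_mult[OF pi_hom pn_carr fo_carr] by simp
    also have "pn n \<otimes>\<^bsub>?FA\<^esub> frag_of (Yg xs n) = frag_of (Yg xs (Suc n)) [^]\<^bsub>?FA\<^esub> (fact n :: nat)"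
      unfolding pn_def by (simp add: frag_cmul_single)
    also have "?pi (frag_of (Yg xs (Suc n)) [^]\<^bsub>?FA\<^esub> (fact n :: nat)) = Y (Suc n) [^]\<^bsub>?G\<^esub> (fact n :: nat)"
      unfolding Y_def gen_elt_def
      by (rule hom_nat_pow[OF pi_hom fo_carr FAg Gg])
    finally show ?thesis .
  qed
  have step: "Poly_Mapping.lookup (\<phi> (Y n)) b = fact n * Poly_Mapping.lookup (\<phi> (Y (Suc n))) b"
    if b: "b \<notin> B0" for n b
  proof -
    have e1: "\<phi> (?pi (pn n) \<otimes>\<^bsub>?G\<^esub> Y n) = \<phi> (?pi (pn n)) + \<phi> (Y n)"
      by (rule \<phi>_mult[OF conjunct1[OF E[of n]] YH])
    have e2: "\<phi> (Y (Suc n) [^]\<^bsub>?G\<^esub> (fact n :: nat)) = frag_cmul (int (fact n)) (\<phi> (Y (Suc n)))"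
      by (rule \<phi>_pow[OF YH])
    have "\<phi> (?pi (pn n)) + \<phi> (Y n) = frag_cmul (int (fact n)) (\<phi> (Y (Suc n)))"
      using e1 e2 EY[of n] by simp
    then have "Poly_Mapping.lookup (\<phi> (?pi (pn n))) b + Poly_Mapping.lookup (\<phi> (Y n)) b
       = int (fact n) * Poly_Mapping.lookup (\<phi> (Y (Suc n))) b"
      by (metis lookup_add lookup_frag_cmul)
    moreover have "Poly_Mapping.lookup (\<phi> (?pi (pn n))) b = 0"
      using conjunct2[OF E[of n]] b by (meson in_keys_iff subsetD)
    ultimately show ?thesis by simp
  qed
  have iter: "Poly_Mapping.lookup (\<phi> (Y 0)) b = (\<Prod>i<n. fact i) * Poly_Mapping.lookup (\<phi> (Y n)) b"
    if b: "b \<notin> B0" for n b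
  proof (induction n)
    case 0 then show ?case by simp
  next
    case (Suc n)
    then show ?case using step[OF b, of n] by (simp add: mult.assoc)
  qed
  have keysY0: "Poly_Mapping.keys (\<phi> (Y 0)) \<subseteq> B0"
  proof
    fix b assume bk: "b \<in> Poly_Mapping.keys (\<phi> (Y 0))"
    show "b \<in> B0"
    proof (rule ccontr)
      assume b: "b \<notin> B0"
      define c where "c = Poly_Mapping.lookup (\<phi> (Y 0)) b"
      have c0: "c \<noteq> 0" using bk unfolding c_def by (simp add: in_keys_iff)
      define m where "m = Suc (nat \<bar>c\<bar>)"
      define P where "P = (\<Prod>i<Suc m. fact i :: int)"
      have "P dvd c"
        unfolding c_def P_def using iter[OF b, of "Suc m"] by (metis dvd_triv_left)
      then have h1: "\<bar>P\<bar> \<le> \<bar>c\<bar>" using dvd_imp_le_int[OF c0] by blast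
      have h2: "P \<ge> int m" unfolding P_def by (rule prod_fact_big)
      have h3: "int m = 1 + \<bar>c\<bar>" unfolding m_def by simp
      show False using h1 h2 h3 abs_ge_self[of P] by linarith
    qed
  qed
  have others: "\<exists>m<Suc k. g \<in> insert Zg (Xg ` lists (Inl ` lists S \<union> Inr ` {xs!j | j. j < Suc k \<and> j \<noteq> m}))"
    if g: "g \<in> An n" for g n
  proof -
    from g consider "g = Zg" | m where "m \<le> k" "g = Xg (restr xs m n)" unfolding An_def by blast
    then show ?thesis
    proof cases
      case 1 then show ?thesis by blast
    next
      case (2 m)
      have "restr xs m n \<in> lists (Inl ` lists S \<union> Inr ` {xs!j | j. j < Suc k \<and> j \<noteq> m})"
      proof -
        have "e \<in> Inl ` lists S \<union> Inr ` {xs!j | j. j < Suc k \<and> j \<noteq> m}"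
          if e: "e \<in> set (restr xs m n)" for e
        proof -
          have len: "length (restr xs m n) = Suc k" unfolding restr_def using xs(1) by simp
          obtain j where j: "j < Suc k" "e = restr xs m n ! j"
            using e len by (metis in_set_conv_nth)
          show ?thesis
          proof (cases "j = m")
            case True
            have "e = Inl (map (xs ! m) [0..<n])"
              using j True 2(1) xs(1) unfolding restr_def by simp
            moreover have "map (xs ! m) [0..<n] \<in> lists S"
            proof -
              have rm: "range (xs ! m) \<subseteq> S" using rangeS[of m] 2(1) by simp
              have "set (map (xs ! m) [0..<n]) \<subseteq> S"
                using rm by (metis image_mono set_map subset_UNIV subset_trans)
              then show ?thesis by (simp add: in_lists_conv_set subset_iff)
            qed
            ultimately show ?thesis by blast
          next
            case False
            have "e = Inr (xs ! j)" using j False xs(1) unfolding restr_def by simp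
            then show ?thesis using j False by blast
          qed
        qed
        then show ?thesis unfolding in_lists_conv_set by (intro ballI)
      qed
      then have "g \<in> insert Zg (Xg ` lists (Inl ` lists S \<union> Inr ` {xs!j | j. j < Suc k \<and> j \<noteq> m}))"
        unfolding 2(2) by (intro insertI2 imageI)
      moreover have "m < Suc k" using 2(1) by simp
      ultimately show ?thesis by (intro exI[of _ m] conjI)
    qed
  qed
  have Psi0: "Psi xs (\<phi>i (frag_of b)) = 0" if b0: "b \<in> B0" and bB: "b \<in> B" for b
  proof -
    obtain n g where g: "g \<in> An n" "b \<in> Poly_Mapping.keys (\<phi> (gen_elt k L a g))"
      using b0 unfolding B0_def by blast
    obtain m where m: "m < Suc k"
      "g \<in> insert Zg (Xg ` lists (Inl ` lists S \<union> Inr ` {xs!j | j. j < Suc k \<and> j \<noteq> m}))"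
      using others[OF g(1)] by blast
    have "invs b \<subseteq> F {xs!j | j. j < Suc k \<and> j \<noteq> m}"
      unfolding F_def using m(2) g(2) by blast
    then have nm: "xs!m \<notin> invs b" using xs(3) m(1) by blast
    have ib: "finite (invb b)" "invb b \<subseteq> gens_U k L U"
      "\<phi>i (frag_of b) \<in> generate ?G (gen_elt k L a ` invb b)" using invb[OF bB] by blast+
    have sub: "gen_elt k L a ` invb b \<subseteq> carrier ?G" using ib(2) gUsub gen_elt_carrier by blast
    have zero: "\<forall>X\<in>gen_elt k L a ` invb b. Psi xs X = 0"
    proof
      fix X assume "X \<in> gen_elt k L a ` invb b"
      then obtain g' where g': "g' \<in> invb b" "X = gen_elt k L a g'" by blast
      have "g' \<in> gens k L" using g'(1) ib(2) gUsub by blast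
      then have "Psi xs X = wt xs g'" using g'(2) Psi_gen_elt by simp
      moreover have "wt xs g' = 0"
      proof (cases g')
        case (Yg z n')
        show ?thesis
        proof (cases "z = xs")
          case True
          have "xs!m \<in> set xs" using m(1) xs(1) by simp
          then have "xs!m \<in> involved g'" using Yg True by simp
          then have "xs!m \<in> invs b" unfolding invs_def using bB g'(1) by auto
          then show ?thesis using nm by blast
        next
          case False then show ?thesis using Yg by (simp add: wt_def)
        qed
      qed (simp_all add: wt_def)
      ultimately show "Psi xs X = 0" by simp
    qed
    show ?thesis by (rule Psi_generate[OF sub zero ib(3)])
  qed
  have chi: "Psi xs (\<phi>i p) = 0" if p: "p \<in> carrier ?FB" and pk: "Poly_Mapping.keys p \<subseteq> B0" for p
  proof -
    have pk': "Poly_Mapping.keys p \<subseteq> B0 \<inter> B" using p pk by simp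
    show ?thesis
    proof (rule free_Abelian_group_induct[OF pk'])
      have oH: "\<one>\<^bsub>?G\<^esub> \<in> ?H" by (rule generate.one)
      have "\<phi>i 0 = \<one>\<^bsub>?G\<^esub>" using \<phi>i\<phi>[OF oH] \<phi>_one by simp
      then show "Psi xs (\<phi>i 0) = 0" using Psi_one by simp
    next
      fix x y :: "('a gen \<Rightarrow>\<^sub>0 int) set \<Rightarrow>\<^sub>0 int"
      assume kx: "Poly_Mapping.keys x \<subseteq> B0 \<inter> B" and ky: "Poly_Mapping.keys y \<subseteq> B0 \<inter> B"
        and Px: "Psi xs (\<phi>i x) = 0" and Py: "Psi xs (\<phi>i y) = 0"
      have xc: "x \<in> carrier ?FB" using kx by simp
      have yc: "y \<in> carrier ?FB" using ky by simp
      define X where "X = \<phi>i x"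
      define Y' where "Y' = \<phi>i y"
      have XH: "X \<in> ?H" unfolding X_def by (rule \<phi>i_in[OF xc])
      have YH': "Y' \<in> ?H" unfolding Y'_def by (rule \<phi>i_in[OF yc])
      have iYH: "inv\<^bsub>?G\<^esub> Y' \<in> ?H" by (rule subgroup.m_inv_closed[OF Hsub YH'])
      have ZH: "X \<otimes>\<^bsub>?G\<^esub> inv\<^bsub>?G\<^esub> Y' \<in> ?H" by (rule subgroup.m_closed[OF Hsub XH iYH])
      have "\<phi> (X \<otimes>\<^bsub>?G\<^esub> inv\<^bsub>?G\<^esub> Y') = \<phi> X + \<phi> (inv\<^bsub>?G\<^esub> Y')" by (rule \<phi>_mult[OF XH iYH])
      also have "\<dots> = x - y" using \<phi>_inv[OF YH'] \<phi>\<phi>i[OF xc] \<phi>\<phi>i[OF yc] unfolding X_def Y'_def by simp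
      finally have "\<phi>i (x - y) = X \<otimes>\<^bsub>?G\<^esub> inv\<^bsub>?G\<^esub> Y'" using \<phi>i\<phi>[OF ZH] by simp
      moreover have "Psi xs (X \<otimes>\<^bsub>?G\<^esub> inv\<^bsub>?G\<^esub> Y') = Psi xs X + Psi xs (inv\<^bsub>?G\<^esub> Y')"
        using Psi_mult Hcarr XH iYH by blast
      moreover have "Psi xs (inv\<^bsub>?G\<^esub> Y') = - Psi xs Y'" using Psi_inv Hcarr YH' by blast
      ultimately show "Psi xs (\<phi>i (x - y)) = 0" using Px Py unfolding X_def Y'_def by simp
    next
      fix b assume "b \<in> B0 \<inter> B"
      then show "Psi xs (\<phi>i (frag_of b)) = 0" using Psi0 by blast
    qed
  qed
  have "Psi xs (Y 0) = 0"
    using chi[OF \<phi>_carr[OF YH[of 0]] keysY0] \<phi>i\<phi>[OF YH[of 0]] by simp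
  moreover have "Psi xs (Y 0) = 1"
    unfolding Y_def using Psi_gen_elt[OF Yg_gens[of 0]] by (simp add: wt_def)
  ultimately show False by simp
qed

end
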